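(* Let $0\le\lambda<\gamma\le\delta$. If $F_1,F_2\in\mathcal{R}(\gamma,\delta,\lambda)$, then $F_1\ast F_2\in\mathcal{R}(\gamma,\delta,\lambda)$.
   Context: Let $\mathcal{U}=\{z\in\mathbb{C}:|z|<1\}$ and let $\mathcal{A}$ be the class of analytic functions $F$ in $\mathcal{U}$ with $F(0)=0$, $F'(0)=1$. For real $0\le\lambda<\gamma\le\delta$, $\mathcal{R}(\gamma,\delta,\lambda)$ is the class of $F\in\mathcal{A}$ such that $\mathrm{Re}\{\gamma F'(z)+\delta zF''(z)+\frac{\delta-\gamma}{2}z^2F'''(z)\}>\lambda$ for all $z\in\mathcal{U}$. For $F_1(z)=z+\sum_{m\ge2}A_mz^m$ and $F_2(z)=z+\sum_{m\ge2}B_mz^m$, the convolution (Hadamard product) is $(F_1\ast F_2)(z)=z+\sum_{m\ge2}A_mB_mz^m$. *)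

theory Defs
  imports "HOL-Complex_Analysis.Complex_Analysis"
begin

abbreviation unit_disc :: "complex set" where
  "unit_disc \<equiv> ball 0 1"

definition class_A :: "(complex \<Rightarrow> complex) set" where
  "class_A = {F. F holomorphic_on unit_disc \<and> F 0 = 0 \<and> deriv F 0 = 1}"

definition class_R :: "real \<Rightarrow> real \<Rightarrow> real \<Rightarrow> (complex \<Rightarrow> complex) set" where
  "class_R gam del lam = {F \<in> class_A. \<forall>z \<in> unit_disc.
      Re (of_real gam * deriv F z + of_real del * z * (deriv ^^ 2) F z
          + of_real ((del - gam) / 2) * z ^ 2 * (deriv ^^ 3) F z) > lam}"

definition taylor_coeff :: "(complex \<Rightarrow> complex) \<Rightarrow> nat \<Rightarrow> complex" where
  "taylor_coeff F n = (deriv ^^ n) F 0 / fact n"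

definition hadamard :: "(complex \<Rightarrow> complex) \<Rightarrow> (complex \<Rightarrow> complex) \<Rightarrow> complex \<Rightarrow> complex" where
  "hadamard F1 F2 z = (\<Sum>n. taylor_coeff F1 n * taylor_coeff F2 n * z ^ n)"

end

theory Submission
  imports Defs
begin


lemma int_interchange:
  fixes f :: "nat \<Rightarrow> real \<Rightarrow> complex"
  assumes cont: "\<And>n. continuous_on {a..b} (f n)"
    and bnd: "\<And>n t. t \<in> {a..b} \<Longrightarrow> norm (f n t) \<le> M n" and sm: "summable M"
  shows "((\<lambda>t. \<Sum>n. f n t) has_integral (\<Sum>n. integral {a..b} (f n))) {a..b}"
    and "continuous_on {a..b} (\<lambda>t. \<Sum>n. f n t)"
proof -
  have u: "uniform_limit {a..b} (\<lambda>n t. \<Sum>i<n. f i t) (\<lambda>t. \<Sum>i. f i t) sequentially"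
    by (rule Weierstrass_m_test[OF bnd sm])
  have c: "\<And>n. continuous_on {a..b} (\<lambda>t. \<Sum>i<n. f i t)"
    by (intro continuous_on_sum cont)
  show "continuous_on {a..b} (\<lambda>t. \<Sum>n. f n t)"
    by (rule uniform_limit_theorem[OF _ u]) (auto simp: c)
  obtain I J where I: "\<And>n. ((\<lambda>t. \<Sum>i<n. f i t) has_integral I n) {a..b}"
    and J: "((\<lambda>t. \<Sum>i. f i t) has_integral J) {a..b}" and lim: "I \<longlonglongrightarrow> J"
    using uniform_limit_integral[OF u c] by auto
  have "I n = (\<Sum>i<n. integral {a..b} (f i))" for n
  proof -
    have "((\<lambda>t. \<Sum>i<n. f i t) has_integral (\<Sum>i<n. integral {a..b} (f i))) {a..b}"
      by (intro has_integral_sum) (auto intro!: integrable_integral integrable_continuous_interval cont)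
    then show ?thesis using I[of n] by (rule has_integral_unique[rotated])
  qed
  then have "I = (\<lambda>n. \<Sum>i<n. integral {a..b} (f i))" by (intro ext)
  then have "(\<lambda>i. integral {a..b} (f i)) sums J" using lim by (simp add: sums_def)
  then show "((\<lambda>t. \<Sum>n. f n t) has_integral (\<Sum>n. integral {a..b} (f n))) {a..b}"
    using J sums_unique by fastforce
qed

definition ee :: "int \<Rightarrow> real \<Rightarrow> complex" where
  "ee m t = exp (\<i> * of_real (of_int m * t))"

lemma ee_mult: "ee m t * ee n t = ee (m + n) t"
  by (simp add: ee_def exp_add[symmetric] algebra_simps)

lemma ee_norm [simp]: "norm (ee m t) = 1"
  by (simp add: ee_def)

lemma ee_cnj: "cnj (ee m t) = ee (- m) t"
  by (simp add: ee_def exp_cnj)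

lemma ee_zero [simp]: "ee 0 t = 1"
  by (simp add: ee_def)

lemma ee_pow: "ee m t ^ n = ee (m * int n) t"
  by (simp add: ee_def exp_of_nat_mult[symmetric] algebra_simps)

lemma ee_cont [continuous_intros]: "continuous_on A (ee m)"
  unfolding ee_def by (intro continuous_intros)

lemma ee_int: "((ee m) has_integral (if m = 0 then 2*pi else 0)) {0..2*pi}"
proof (cases "m = 0")
  case True
  have "ee 0 = (\<lambda>_. 1)" by auto
  then show ?thesis using True has_integral_const_real[of "1::complex" 0 "2*pi"] by (simp add: scaleR_conv_of_real)
next
  case False
  define g where "g z = exp (\<i> * of_int m * z) / (\<i> * of_int m)" for z :: complex
  have d: "(g has_field_derivative exp (\<i> * of_int m * z)) (at z)" for z
    unfolding g_def using False
    by (auto intro!: derivative_eq_intros simp: field_simps)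
  have "(ee m has_integral ((\<lambda>x. g (of_real x)) (2*pi) - (\<lambda>x. g (of_real x)) 0)) {0..2*pi}"
  proof (rule fundamental_theorem_of_calculus)
    fix x :: real assume "x \<in> {0..2*pi}"
    have "((\<lambda>x. g (of_real x)) has_vector_derivative exp (\<i> * of_int m * of_real x)) (at x within {0..2*pi})"
      by (rule has_vector_derivative_real_field[OF d])
    then show "((\<lambda>x. g (of_real x)) has_vector_derivative ee m x) (at x within {0..2*pi})"
      by (simp add: ee_def algebra_simps)
  qed simp
  moreover have "g (of_real (2*pi)) = g 0"
  proof -
    have "exp (\<i> * of_int m * of_real (2*pi)) = exp ((2 * of_int m * pi) * \<i>)"
      by (simp add: algebra_simps)
    also have "\<dots> = 1" by (rule exp_integer_2pi) simp
    finally show ?thesis by (simp add: g_def)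
  qed
  ultimately show ?thesis using False by simp
qed

lemma series_int:
  fixes p :: "nat \<Rightarrow> complex" and \<sigma> :: "nat \<Rightarrow> int"
  assumes sp: "summable (\<lambda>n. norm (p n))"
  shows "((\<lambda>t. \<Sum>n. p n * ee (\<sigma> n) t) has_integral (2*pi * (\<Sum>n. if \<sigma> n = 0 then p n else 0))) {0..2*pi}"
    and "continuous_on {0..2*pi} (\<lambda>t. \<Sum>n. p n * ee (\<sigma> n) t)"
proof -
  have c: "\<And>n. continuous_on {0..2*pi} (\<lambda>t. p n * ee (\<sigma> n) t)"
    by (intro continuous_intros)
  have b: "\<And>n t. t \<in> {0..2*pi} \<Longrightarrow> norm (p n * ee (\<sigma> n) t) \<le> norm (p n)"
    by (simp add: norm_mult)
  note R = int_interchange[where f="\<lambda>n t. p n * ee (\<sigma> n) t", OF c b sp]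
  show "continuous_on {0..2*pi} (\<lambda>t. \<Sum>n. p n * ee (\<sigma> n) t)" by (rule R(2))
  have ii: "integral {0..2*pi} (\<lambda>t. p n * ee (\<sigma> n) t) = 2*pi * (if \<sigma> n = 0 then p n else 0)" for n
    using has_integral_mult_right[OF ee_int[of "\<sigma> n"], of "p n"]
    by (auto dest!: integral_unique simp: mult.commute)
  have sm: "summable (\<lambda>n. if \<sigma> n = 0 then p n else 0)"
    by (rule summable_norm_cancel, rule summable_comparison_test[OF _ sp]) auto
  have "(\<Sum>n. integral {0..2*pi} (\<lambda>t. p n * ee (\<sigma> n) t)) = 2*pi * (\<Sum>n. if \<sigma> n = 0 then p n else 0)"
    unfolding ii by (rule suminf_mult[OF sm])
  with R(1) show "((\<lambda>t. \<Sum>n. p n * ee (\<sigma> n) t) has_integral (2*pi * (\<Sum>n. if \<sigma> n = 0 then p n else 0))) {0..2*pi}"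
    by simp
qed

lemma suminf_single_nat: "(\<Sum>k. if k = i then f k else 0) = (f i :: 'a::{t2_space,comm_monoid_add})"
  using sums_single[of i f] by (simp add: sums_iff)

lemma series_int_shift:
  fixes q :: "nat \<Rightarrow> complex" and m :: int
  assumes sq: "summable (\<lambda>n. norm (q n))"
  shows "((\<lambda>t. \<Sum>k. q k * ee (m - int k) t) has_integral (2*pi * (if m \<ge> 0 then q (nat m) else 0))) {0..2*pi}"
proof -
  have "(\<Sum>k. if m - int k = 0 then q k else 0) = (if m \<ge> 0 then q (nat m) else 0)"
  proof (cases "m \<ge> 0")
    case True
    have "(\<lambda>k. if m - int k = 0 then q k else 0) = (\<lambda>k. if k = nat m then q k else 0)"
      using True by (intro ext) auto
    then show ?thesis using True suminf_single_nat[of "nat m" q] by simp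
  next
    case False
    then have "(\<lambda>k. if m - int k = 0 then q k else 0) = (\<lambda>k. 0)" by (intro ext) auto
    then show ?thesis using False by simp
  qed
  then show ?thesis using series_int(1)[OF sq, of "\<lambda>k. m - int k"] by simp
qed

lemma double_series_int:
  fixes p q :: "nat \<Rightarrow> complex" and \<sigma> :: "nat \<Rightarrow> int"
  assumes sp: "summable (\<lambda>n. norm (p n))" and sq: "summable (\<lambda>n. norm (q n))"
  shows "((\<lambda>t. \<Sum>n. p n * (\<Sum>k. q k * ee (\<sigma> n - int k) t)) has_integral
           (2*pi * (\<Sum>n. p n * (if \<sigma> n \<ge> 0 then q (nat (\<sigma> n)) else 0)))) {0..2*pi}"
proof -
  define S where "S = (\<Sum>k. norm (q k))"
  have c: "\<And>n. continuous_on {0..2*pi} (\<lambda>t. p n * (\<Sum>k. q k * ee (\<sigma> n - int k) t))"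
    using series_int(2)[OF sq] by (intro continuous_intros) auto
  have b: "norm (p n * (\<Sum>k. q k * ee (\<sigma> n - int k) t)) \<le> norm (p n) * S" for n t
  proof -
    have "norm (\<Sum>k. q k * ee (\<sigma> n - int k) t) \<le> (\<Sum>k. norm (q k * ee (\<sigma> n - int k) t))"
      by (rule summable_norm) (simp add: norm_mult sq)
    also have "\<dots> = S" by (simp add: norm_mult S_def)
    finally show ?thesis by (simp add: norm_mult mult_left_mono)
  qed
  have sM: "summable (\<lambda>n. norm (p n) * S)" by (intro summable_mult2 sp)
  note R = int_interchange[where f="\<lambda>n t. p n * (\<Sum>k. q k * ee (\<sigma> n - int k) t)", OF c b sM]
  have ii: "integral {0..2*pi} (\<lambda>t. p n * (\<Sum>k. q k * ee (\<sigma> n - int k) t)) =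
      2*pi * (p n * (if \<sigma> n \<ge> 0 then q (nat (\<sigma> n)) else 0))" for n
    using has_integral_mult_right[OF series_int_shift[OF sq, of "\<sigma> n"], of "p n"]
    by (auto dest!: integral_unique simp: algebra_simps)
  have sm: "summable (\<lambda>n. p n * (if \<sigma> n \<ge> 0 then q (nat (\<sigma> n)) else 0))"
  proof (rule summable_norm_cancel, rule summable_comparison_test[OF _ sM])
    have "norm (q j) \<le> S" for j unfolding S_def
      using sum_le_suminf[OF sq, of "{j}"] by simp
    moreover have "0 \<le> S" unfolding S_def by (intro suminf_nonneg sq) auto
    ultimately show "\<exists>N. \<forall>n\<ge>N. norm (norm (p n * (if \<sigma> n \<ge> 0 then q (nat (\<sigma> n)) else 0))) \<le> norm (p n) * S"
      by (auto simp: norm_mult intro!: mult_left_mono)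
  qed
  have "(\<Sum>n. integral {0..2*pi} (\<lambda>t. p n * (\<Sum>k. q k * ee (\<sigma> n - int k) t))) =
       2*pi * (\<Sum>n. p n * (if \<sigma> n \<ge> 0 then q (nat (\<sigma> n)) else 0))"
    unfolding ii by (rule suminf_mult[OF sm])
  with R(1) show ?thesis by simp
qed



lemma lemmaA:
  fixes a \<beta> :: "nat \<Rightarrow> complex" and g0 lam c :: real and \<zeta> :: complex
  assumes sa: "summable (\<lambda>n. norm (a n))" and sb: "summable (\<lambda>n. norm (\<beta> n))"
    and a0: "a 0 = of_real g0"
    and ha: "\<And>w. norm w = 1 \<Longrightarrow> Re (\<Sum>n. a n * w^n) \<ge> lam"
    and hb: "\<And>w. norm w = 1 \<Longrightarrow> Re (\<Sum>n. \<beta> n * w^n) \<ge> c"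
    and z: "norm \<zeta> = 1"
  shows "Re (\<Sum>k. \<beta> k * a k * \<zeta>^k) + Re (\<beta> 0) * (g0 - 2*lam) \<ge> 2*c*(g0 - lam)"
proof -
  define q where "q k = \<beta> k * \<zeta>^k" for k
  have sq: "summable (\<lambda>n. norm (q n))" using sb z by (simp add: q_def norm_mult norm_power)
  define X where "X t = (\<Sum>n. a n * ee (int n) t)" for t
  define Y where "Y t = (\<Sum>k. q k * ee (- int k) t)" for t
  have sa': "summable (\<lambda>n. a n * ee (m * int n) t)" for m t
    by (rule summable_norm_cancel) (simp add: norm_mult sa)
  have sq': "summable (\<lambda>n. q n * ee (m * int n) t)" for m t
    by (rule summable_norm_cancel) (simp add: norm_mult sq)
  have ReX: "Re (X t) \<ge> lam" for t
  proof -
    have "X t = (\<Sum>n. a n * ee 1 t ^ n)" by (simp add: X_def ee_pow)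
    then show ?thesis using ha[of "ee 1 t"] by simp
  qed
  have ReY: "Re (Y t) \<ge> c" for t
  proof -
    have "Y t = (\<Sum>n. \<beta> n * (\<zeta> * ee (-1) t) ^ n)"
      by (simp add: Y_def q_def ee_pow power_mult_distrib mult.assoc)
    then show ?thesis using hb[of "\<zeta> * ee (-1) t"] z by (simp add: norm_mult)
  qed
  have I1: "((\<lambda>t. X t * Y t) has_integral (2*pi * (\<Sum>n. a n * q n))) {0..2*pi}"
  proof -
    have "X t * Y t = (\<Sum>n. a n * (\<Sum>k. q k * ee (int n - int k) t))" for t
    proof -
      have "X t * Y t = (\<Sum>n. a n * ee (int n) t * Y t)"
        unfolding X_def using suminf_mult2[OF sa'[of 1 t]] by simp
      also have "\<dots> = (\<Sum>n. a n * (\<Sum>k. q k * ee (int n - int k) t))"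
      proof (intro suminf_cong)
        fix n
        have "ee (int n) t * Y t = (\<Sum>k. ee (int n) t * (q k * ee (- int k) t))"
          unfolding Y_def using suminf_mult[OF sq'[of "-1" t]] by simp
        also have "\<dots> = (\<Sum>k. q k * ee (int n - int k) t)"
          by (intro suminf_cong) (simp add: ee_mult algebra_simps)
        finally show "a n * ee (int n) t * Y t = a n * (\<Sum>k. q k * ee (int n - int k) t)"
          by (simp add: mult.assoc)
      qed
      finally show ?thesis .
    qed
    then show ?thesis using double_series_int[OF sa sq, of int] by simp
  qed
  have I2: "((\<lambda>t. cnj (X t) * Y t) has_integral (2*pi * (cnj (a 0) * q 0))) {0..2*pi}"
  proof -
    have sca: "summable (\<lambda>n. norm (cnj (a n)))" using sa by simp
    have "cnj (X t) * Y t = (\<Sum>n. cnj (a n) * (\<Sum>k. q k * ee (- int n - int k) t))" for t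
    proof -
      have cX: "cnj (X t) = (\<Sum>n. cnj (a n) * ee (- int n) t)"
      proof -
        have "(\<lambda>n. cnj (a n * ee (1 * int n) t)) sums cnj (X t)"
          unfolding X_def using summable_sums[OF sa'[of 1 t]] by (subst sums_cnj) simp
        then show ?thesis by (simp add: sums_iff ee_cnj)
      qed
      have "cnj (X t) * Y t = (\<Sum>n. cnj (a n) * ee (- int n) t * Y t)"
      proof -
        have "summable (\<lambda>n. cnj (a n) * ee (- int n) t)"
          by (rule summable_norm_cancel) (simp add: norm_mult sa)
        then show ?thesis unfolding cX by (rule suminf_mult2)
      qed
      also have "\<dots> = (\<Sum>n. cnj (a n) * (\<Sum>k. q k * ee (- int n - int k) t))"
      proof (intro suminf_cong)
        fix n
        have "ee (- int n) t * Y t = (\<Sum>k. ee (- int n) t * (q k * ee (- int k) t))"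
          unfolding Y_def using suminf_mult[OF sq'[of "-1" t]] by simp
        also have "\<dots> = (\<Sum>k. q k * ee (- int n - int k) t)"
        proof (intro suminf_cong)
          fix k
          have "ee (- int n) t * ee (- int k) t = ee (- int n - int k) t"
            using ee_mult[of "- int n" t "- int k"] by simp
          then show "ee (- int n) t * (q k * ee (- int k) t) = q k * ee (- int n - int k) t"
            by (metis mult.left_commute)
        qed
        finally show "cnj (a n) * ee (- int n) t * Y t = cnj (a n) * (\<Sum>k. q k * ee (- int n - int k) t)"
          by (simp add: mult.assoc)
      qed
      finally show ?thesis .
    qed
    moreover have "(\<Sum>n. cnj (a n) * (if - int n \<ge> 0 then q (nat (- int n)) else 0)) = cnj (a 0) * q 0"
    proof -
      have "(\<lambda>n. cnj (a n) * (if - int n \<ge> 0 then q (nat (- int n)) else 0)) =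
            (\<lambda>n. if n = 0 then cnj (a n) * q n else 0)" by (intro ext) auto
      then show ?thesis using suminf_single_nat[of 0 "\<lambda>n. cnj (a n) * q n"] by simp
    qed
    ultimately show ?thesis using double_series_int[OF sca sq, of "\<lambda>n. - int n"] by simp
  qed
  have I3: "(Y has_integral (2*pi * q 0)) {0..2*pi}"
    unfolding Y_def using series_int_shift[OF sq, of 0] by simp
  have I4: "(X has_integral (2*pi * a 0)) {0..2*pi}"
  proof -
    have "(\<Sum>n. if int n = 0 then a n else 0) = a 0"
      using suminf_single_nat[of 0 a] by (simp cong: if_cong)
    then show ?thesis unfolding X_def using series_int(1)[OF sa, of int] by simp
  qed
  have I5: "((\<lambda>t. cnj (X t)) has_integral (2*pi * cnj (a 0))) {0..2*pi}"
    using has_integral_cnj[THEN iffD2, OF I4] by (simp add: o_def)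
  define U where "U t = (X t + cnj (X t)) / 2 - of_real lam" for t
  define W where "W t = U t * Y t - of_real c * U t" for t
  define IW where "IW = ((2*pi * (\<Sum>n. a n * q n)) + 2*pi * (cnj (a 0) * q 0)) / 2 - of_real lam * (2*pi * q 0)
     - of_real c * (((2*pi * a 0) + 2*pi * cnj (a 0)) / 2 - of_real lam * of_real (2*pi))"
  have IW: "(W has_integral IW) {0..2*pi}"
  proof -
    have C1: "((\<lambda>_. 1::complex) has_integral of_real (2*pi)) {0..2*pi}"
      using has_integral_const_real[of "1::complex" 0 "2*pi"] by (simp add: scaleR_conv_of_real)
    have "W = (\<lambda>t. (X t * Y t + cnj (X t) * Y t) / 2 - of_real lam * Y t
       - of_real c * ((X t + cnj (X t)) / 2 - of_real lam * 1))"
      by (rule ext) (simp add: W_def U_def algebra_simps)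
    moreover have "((\<lambda>t. (X t * Y t + cnj (X t) * Y t) / 2 - of_real lam * Y t
       - of_real c * ((X t + cnj (X t)) / 2 - of_real lam * 1)) has_integral IW) {0..2*pi}"
      unfolding IW_def
      by (intro has_integral_diff has_integral_mult_right has_integral_divide has_integral_add I1 I2 I3 I4 I5 C1)
    ultimately show ?thesis by simp
  qed
  have "Re (W t) \<ge> 0" for t
  proof -
    have "Im (U t) = 0" "Re (U t) = Re (X t) - lam" by (simp_all add: U_def)
    then have "Re (W t) = Re (U t) * (Re (Y t) - c)" by (simp add: W_def algebra_simps)
    then show ?thesis using ReX[of t] ReY[of t] \<open>Re (U t) = Re (X t) - lam\<close> by simp
  qed
  then have "0 \<le> Re IW" using has_integral_nonneg[OF has_integral_Re[OF IW]] by auto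
  moreover have "Re IW = pi * (Re (\<Sum>n. a n * q n) + g0 * Re (\<beta> 0) - 2 * lam * Re (\<beta> 0) - 2 * c * g0 + 2 * c * lam)"
    by (simp add: IW_def a0 q_def algebra_simps)
  moreover have "(\<Sum>n. a n * q n) = (\<Sum>k. \<beta> k * a k * \<zeta>^k)"
    by (simp add: q_def algebra_simps)
  ultimately have "0 \<le> pi * (Re (\<Sum>k. \<beta> k * a k * \<zeta>^k) + g0 * Re (\<beta> 0) - 2 * lam * Re (\<beta> 0) - 2 * c * g0 + 2 * c * lam)"
    by simp
  then have "0 \<le> Re (\<Sum>k. \<beta> k * a k * \<zeta>^k) + g0 * Re (\<beta> 0) - 2 * lam * Re (\<beta> 0) - 2 * c * g0 + 2 * c * lam"
    using pi_gt_zero by (simp add: zero_le_mult_iff)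
  then show ?thesis by (simp add: algebra_simps)
qed



lemma abel2:
  fixes s c :: "nat \<Rightarrow> real"
  shows "(\<Sum>k\<le>Suc N. s k * c k) = (\<Sum>k<N. (s k - 2 * s (k+1) + s(k+2)) * (\<Sum>j\<le>k. \<Sum>i\<le>j. c i))
     + (s N - s (Suc N)) * (\<Sum>j\<le>N. \<Sum>i\<le>j. c i) + s (Suc N) * (\<Sum>i\<le>Suc N. c i)"
proof (induction N)
  case 0
  then show ?case by (simp add: algebra_simps)
next
  case (Suc N)
  have L: "(\<Sum>k\<le>Suc (Suc N). s k * c k) = (\<Sum>k\<le>Suc N. s k * c k) + s (Suc (Suc N)) * c (Suc (Suc N))"
    by (rule sum.atMost_Suc)
  have F: "(\<Sum>j\<le>Suc N. \<Sum>i\<le>j. c i) = (\<Sum>j\<le>N. \<Sum>i\<le>j. c i) + (\<Sum>i\<le>Suc N. c i)"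
    by (rule sum.atMost_Suc)
  have D: "(\<Sum>i\<le>Suc (Suc N). c i) = (\<Sum>i\<le>Suc N. c i) + c (Suc (Suc N))"
    by (rule sum.atMost_Suc)
  have S: "(\<Sum>k<Suc N. (s k - 2 * s (k+1) + s(k+2)) * (\<Sum>j\<le>k. \<Sum>i\<le>j. c i)) =
     (\<Sum>k<N. (s k - 2 * s (k+1) + s(k+2)) * (\<Sum>j\<le>k. \<Sum>i\<le>j. c i)) + (s N - 2 * s (N+1) + s(N+2)) * (\<Sum>j\<le>N. \<Sum>i\<le>j. c i)"
    by (rule sum.lessThan_Suc)
  show ?case
    by (simp only: L Suc.IH) (simp only: F D S, simp add: algebra_simps)
qed

lemma cmod_add_sq: "cmod (a + b)^2 = cmod a^2 + 2 * Re (a * cnj b) + cmod b^2"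
  unfolding cmod_power2 by (simp add: power2_eq_square algebra_simps)

lemma fejer_kernel:
  fixes w :: complex
  assumes w: "norm w = 1"
  shows "cmod (\<Sum>k\<le>n. w^k)^2 = 2 * (\<Sum>j\<le>n. \<Sum>i\<le>j. (if i = 0 then 1/2 else Re (w^i)))"
proof -
  have cw: "w * cnj w = 1" using w by (simp add: complex_norm_square[symmetric])
  have R: "(\<Sum>k\<le>n. w^k) * cnj w ^ (Suc n) = (\<Sum>i\<le>n. cnj w ^ Suc i)" for n
  proof (induction n)
    case 0 then show ?case by simp
  next
    case (Suc n)
    have "(\<Sum>k\<le>Suc n. w^k) * cnj w ^ Suc (Suc n) = cnj w * ((\<Sum>k\<le>n. w^k) * cnj w ^ (Suc n)) + cnj w * (w * cnj w) ^ Suc n"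
      by (simp add: algebra_simps power_mult_distrib)
    also have "\<dots> = cnj w * (\<Sum>i\<le>n. cnj w ^ Suc i) + cnj w" using Suc.IH cw by simp
    also have "\<dots> = (\<Sum>i\<le>Suc n. cnj w ^ Suc i)"
      by (subst sum.atMost_Suc_shift) (simp add: sum_distrib_left)
    finally show ?case .
  qed
  have D: "(\<Sum>i\<le>Suc n. (if i = 0 then 1/2 else Re (w^i))) = 1/2 + (\<Sum>i\<le>n. Re (w ^ Suc i))" for n
    by (subst sum.atMost_Suc_shift) simp
  show ?thesis
  proof (induction n)
    case 0 then show ?case by simp
  next
    case (Suc n)
    have "cmod (\<Sum>k\<le>Suc n. w^k)^2 = cmod (\<Sum>k\<le>n. w^k)^2 + 2 * Re ((\<Sum>k\<le>n. w^k) * cnj (w ^ Suc n)) + 1"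
      using w by (simp add: cmod_add_sq norm_power norm_mult)
    also have "Re ((\<Sum>k\<le>n. w^k) * cnj (w ^ Suc n)) = (\<Sum>i\<le>n. Re (cnj w ^ Suc i))"
      using R[of n] by (simp only: complex_cnj_power Re_sum)
    also have "\<dots> = (\<Sum>i\<le>n. Re (w ^ Suc i))"
    proof (intro sum.cong refl)
      fix i
      have "Re (cnj w ^ Suc i) = Re (cnj (w ^ Suc i))" by (simp only: complex_cnj_power)
      then show "Re (cnj w ^ Suc i) = Re (w ^ Suc i)" by (metis cnj.simps(1))
    qed
    finally show ?case using Suc.IH D[of n] by simp
  qed
qed

lemma fejer:
  fixes s :: "nat \<Rightarrow> real" and w :: complex
  assumes w: "norm w = 1"
    and conv: "\<And>k. s k - 2 * s (k+1) + s (k+2) \<ge> 0"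
    and dec: "\<And>k. s (Suc k) \<le> s k"
    and nn: "\<And>k. s k \<ge> 0"
    and sm: "summable s"
    and lim: "(\<lambda>n. s n * (real n + 1)) \<longlonglongrightarrow> 0"
  shows "0 \<le> (\<Sum>k. s k * (if k = 0 then 1/2 else Re (w^k)))"
proof -
  define c where "c k = (if k = 0 then 1/2 else Re (w^k))" for k
  have cb: "\<bar>c k\<bar> \<le> 1" for k
    using abs_Re_le_cmod[of "w^k"] w by (simp add: c_def norm_power)
  have smc: "summable (\<lambda>k. s k * c k)"
  proof (rule summable_comparison_test[OF _ sm], intro exI allI impI)
    fix n
    have "\<bar>s n\<bar> * \<bar>c n\<bar> \<le> \<bar>s n\<bar> * 1" by (intro mult_left_mono cb) simp
    then show "norm (s n * c n) \<le> s n" using nn[of n] by (simp add: abs_mult)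
  qed
  have Fnn: "0 \<le> (\<Sum>j\<le>k. \<Sum>i\<le>j. c i)" for k
  proof -
    have "0 \<le> 2 * (\<Sum>j\<le>k. \<Sum>i\<le>j. c i)"
      unfolding c_def fejer_kernel[OF w, of k, symmetric] by simp
    then show ?thesis by simp
  qed
  have Db: "\<bar>\<Sum>i\<le>n. c i\<bar> \<le> real n + 1" for n
  proof -
    have "\<bar>\<Sum>i\<le>n. c i\<bar> \<le> (\<Sum>i\<le>n. \<bar>c i\<bar>)" by (rule sum_abs)
    also have "\<dots> \<le> (\<Sum>i\<le>n. 1)" by (intro sum_mono cb)
    finally show ?thesis by simp
  qed
  have low: "- (s (Suc N) * (real (Suc N) + 1)) \<le> (\<Sum>k<Suc (Suc N). s k * c k)" for N
  proof -
    have "(\<Sum>k<Suc (Suc N). s k * c k) = (\<Sum>k\<le>Suc N. s k * c k)"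
      by (simp add: lessThan_Suc_atMost)
    also have "\<dots> = (\<Sum>k<N. (s k - 2 * s (k+1) + s(k+2)) * (\<Sum>j\<le>k. \<Sum>i\<le>j. c i))
     + (s N - s (Suc N)) * (\<Sum>j\<le>N. \<Sum>i\<le>j. c i) + s (Suc N) * (\<Sum>i\<le>Suc N. c i)"
      by (rule abel2)
    also have "\<dots> \<ge> s (Suc N) * (\<Sum>i\<le>Suc N. c i)"
    proof -
      have "0 \<le> (\<Sum>k<N. (s k - 2 * s (k+1) + s(k+2)) * (\<Sum>j\<le>k. \<Sum>i\<le>j. c i))"
        by (intro sum_nonneg mult_nonneg_nonneg conv Fnn)
      moreover have "0 \<le> (s N - s (Suc N)) * (\<Sum>j\<le>N. \<Sum>i\<le>j. c i)"
        using dec[of N] Fnn[of N] by simp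
      ultimately show ?thesis by linarith
    qed
    moreover have "s (Suc N) * (\<Sum>i\<le>Suc N. c i) \<ge> - (s (Suc N) * (real (Suc N) + 1))"
    proof -
      have "\<bar>s (Suc N) * (\<Sum>i\<le>Suc N. c i)\<bar> \<le> s (Suc N) * (real (Suc N) + 1)"
        using Db[of "Suc N"] nn[of "Suc N"] by (simp add: abs_mult mult_left_mono)
      then show ?thesis by linarith
    qed
    ultimately show ?thesis by linarith
  qed
  have l1: "(\<lambda>N. \<Sum>k<Suc (Suc N). s k * c k) \<longlonglongrightarrow> (\<Sum>k. s k * c k)"
  proof -
    have "(\<lambda>n. \<Sum>k<n. s k * c k) \<longlonglongrightarrow> (\<Sum>k. s k * c k)"
      using summable_sums[OF smc] by (simp add: sums_def)
    then show ?thesis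
      by (intro filterlim_compose[OF _ filterlim_Suc] filterlim_compose[where f=Suc, OF _ filterlim_Suc]) 
  qed
  have l2: "(\<lambda>N. - (s (Suc N) * (real (Suc N) + 1))) \<longlonglongrightarrow> 0"
    using tendsto_minus[OF filterlim_compose[OF lim filterlim_Suc]] by (simp add: o_def)
  have "0 \<le> (\<Sum>k. s k * c k)"
    by (rule LIMSEQ_le[OF l2 l1]) (use low in auto)
  then show ?thesis by (simp add: c_def)
qed



lemma frac_le_cross: fixes a b c d :: real
  assumes "b > 0" "d > 0" "a * d \<le> c * b" shows "a / b \<le> c / d"
  using assms by (simp add: field_simps)

lemma conv_prod:
  fixes a b c x y z :: real
  assumes "a \<ge> b" "b \<ge> c" "c \<ge> 0" "x \<ge> y" "y \<ge> z" "z \<ge> 0" "a + c \<ge> 2*b" "x + z \<ge> 2*y"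
  shows "a*x + c*z \<ge> 2*(b*y)"
proof -
  have "a * x \<ge> (2*b - c) * (2*y - z)"
    using assms by (intro mult_mono) auto
  moreover have "(2*b - c) * (2*y - z) + c*z - 2*(b*y) = 2*((b - c)*(y - z))"
    by (simp add: algebra_simps)
  moreover have "(b - c)*(y - z) \<ge> 0" using assms by simp
  ultimately show ?thesis by linarith
qed

lemma conv_u:
  fixes y :: real assumes y: "y \<ge> 2"
  shows "2/y^2 \<le> 1/(y-1)^2 + 1/(y+1)^2"
proof -
  have a: "y - 1 > 0" "y + 1 > 0" "y > 0" using y by auto
  have e: "1/(y-1)^2 + 1/(y+1)^2 = ((y+1)^2 + (y-1)^2) / ((y-1)^2*(y+1)^2)"
    using a by (simp add: field_simps)
  have "2 * ((y-1)^2*(y+1)^2) \<le> ((y+1)^2 + (y-1)^2) * y^2"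
  proof -
    have "((y+1)^2 + (y-1)^2) * y^2 - 2 * ((y-1)^2*(y+1)^2) = 6*y^2 - 2"
      by (simp add: algebra_simps power2_eq_square)
    moreover have "6*y^2 - 2 \<ge> 0"
    proof -
      have "2*2 \<le> y*y" using mult_mono[of 2 y 2 y] y by simp
      then show ?thesis by (simp add: power2_eq_square)
    qed
    ultimately show ?thesis by linarith
  qed
  then have "2/y^2 \<le> ((y+1)^2 + (y-1)^2) / ((y-1)^2*(y+1)^2)"
    using a by (intro frac_le_cross) auto
  with e show ?thesis by simp
qed

lemma conv_v:
  fixes p d :: real assumes "d \<ge> 0" "p - d > 0"
  shows "2/p \<le> 1/(p-d) + 1/(p+d)"
proof -
  have p: "p > 0" "p + d > 0" using assms by auto
  have e: "1/(p-d) + 1/(p+d) = (2*p) / ((p-d)*(p+d))"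
    using p assms by (simp add: field_simps)
  have "2 * ((p-d)*(p+d)) \<le> (2*p) * p" using assms by (simp add: algebra_simps)
  then have "2/p \<le> (2*p) / ((p-d)*(p+d))" using p assms by (intro frac_le_cross) auto
  with e show ?thesis by simp
qed

definition CC :: "real \<Rightarrow> real \<Rightarrow> nat \<Rightarrow> real" where
  "CC g d m = (real m + 1)^2 * ((d - g) * real m + 2*g) / 2"

definition eps :: "real \<Rightarrow> real \<Rightarrow> real \<Rightarrow> nat \<Rightarrow> real" where
  "eps g d l k = (g - l) / CC g d k"

context
  fixes g d l :: real
  assumes A: "0 \<le> l" "l < g" "g \<le> d"
begin

lemma CC_ge: "CC g d m \<ge> g * (real m + 1)^2"
proof -
  have "(d - g) * real m \<ge> 0" using A by simp
  then have "(real m + 1)^2 * ((d - g) * real m + 2*g) \<ge> (real m + 1)^2 * (2*g)"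
    by (intro mult_left_mono) auto
  then show ?thesis by (simp add: CC_def)
qed

lemma CC_pos: "CC g d m > 0"
proof -
  have "g * (real m + 1)^2 > 0" using A by (intro mult_pos_pos) auto
  then show ?thesis using CC_ge[of m] by linarith
qed

lemma eps_alt: "eps g d l k = (g - l) * (1 / (real k + 1)^2) * (2 / ((d - g) * real k + 2*g))"
  by (simp add: eps_def CC_def)

lemma eps_nn: "eps g d l k \<ge> 0"
  using CC_pos[of k] A by (simp add: eps_def)

lemma eps_le: "eps g d l k \<le> 1 / (real k + 1)^2"
proof -
  have "eps g d l k \<le> g / (g * (real k + 1)^2)"
    unfolding eps_def using A CC_ge[of k]
    by (intro frac_le) (auto intro!: mult_pos_pos)
  also have "\<dots> = 1 / (real k + 1)^2" using A by simp
  finally show ?thesis .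
qed

lemma eps_dec: "eps g d l (Suc k) \<le> eps g d l k"
proof -
  have h1: "(real k + 1)^2 \<le> (real (Suc k) + 1)^2" by (intro power_mono) auto
  have h2: "(d - g) * real k + 2*g \<le> (d - g) * real (Suc k) + 2*g" using A by (simp add: algebra_simps)
  have h3: "0 \<le> (d - g) * real k + 2*g" using A by simp
  have "CC g d k \<le> CC g d (Suc k)"
    unfolding CC_def by (intro divide_right_mono mult_mono h1 h2 h3) auto
  then show ?thesis unfolding eps_def using A CC_pos[of k]
    by (intro divide_left_mono) (auto intro!: mult_pos_pos)
qed

lemma eps_conv: "eps g d l k - 2 * eps g d l (k+1) + eps g d l (k+2) \<ge> 0"
proof -
  define u where "u j = 1 / (real j + 1)^2" for j :: nat
  define v where "v j = 2 / ((d - g) * real j + 2*g)" for j :: nat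
  have vpos: "(d - g) * real j + 2*g > 0" for j
  proof -
    have "(d - g) * real j \<ge> 0" using A by simp
    then show ?thesis using A by linarith
  qed
  have udec: "u (Suc j) \<le> u j" for j unfolding u_def
    by (intro divide_left_mono power_mono mult_pos_pos) auto
  have vdec: "v (Suc j) \<le> v j" for j unfolding v_def
  proof (rule divide_left_mono)
    show "(d - g) * real j + 2*g \<le> (d - g) * real (Suc j) + 2*g" using A by (simp add: algebra_simps)
    show "0 \<le> (2::real)" by simp
    show "0 < ((d - g) * real (Suc j) + 2*g) * ((d - g) * real j + 2*g)"
      using vpos[of j] vpos[of "Suc j"] by simp
  qed
  have unn: "u j \<ge> 0" for j by (simp add: u_def)
  have vnn: "v j \<ge> 0" for j using vpos[of j] by (simp add: v_def)
  have uc: "u k + u (k+2) \<ge> 2 * u (k+1)"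
    using conv_u[of "real k + 2"] by (simp add: u_def algebra_simps)
  have vc: "v k + v (k+2) \<ge> 2 * v (k+1)"
  proof -
    have "2 / ((d - g) * real (k+1) + 2*g) \<le> 1 / ((d - g) * real (k+1) + 2*g - (d - g)) +
      1 / ((d - g) * real (k+1) + 2*g + (d - g))"
      using A vpos[of k] by (intro conv_v) (auto simp: algebra_simps)
    then show ?thesis unfolding v_def by (simp add: algebra_simps)
  qed
  have "u k * v k + u (k+2) * v (k+2) \<ge> 2 * (u (k+1) * v (k+1))"
    using udec[of k] udec[of "k+1"] vdec[of k] vdec[of "k+1"] unn[of "k+2"] vnn[of "k+2"] uc vc
    by (intro conv_prod) auto
  then have "(g - l) * (u k * v k + u (k+2) * v (k+2)) \<ge> (g - l) * (2 * (u (k+1) * v (k+1)))"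
    using A by (intro mult_left_mono) auto
  then show ?thesis unfolding eps_alt u_def[symmetric] v_def[symmetric]
    by (simp add: algebra_simps)
qed

lemma summable_invsq: "summable (\<lambda>n::nat. 1 / (real n + 1)^2)"
  using inverse_squares_sums by (simp add: sums_iff add.commute)

lemma eps_summable: "summable (eps g d l)"
  by (rule summable_comparison_test[OF _ summable_invsq]) (auto simp: eps_nn eps_le)

lemma eps_lim: "(\<lambda>n. eps g d l n * (real n + 1)) \<longlonglongrightarrow> 0"
proof (rule Lim_null_comparison[OF _ LIMSEQ_inverse_real_of_nat])
  show "\<forall>\<^sub>F n in sequentially. norm (eps g d l n * (real n + 1)) \<le> inverse (real (Suc n))"
  proof (intro always_eventually allI)
    fix n
    have "eps g d l n * (real n + 1) \<le> 1 / (real n + 1)^2 * (real n + 1)"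
      by (intro mult_right_mono eps_le) auto
    also have "\<dots> = inverse (real (Suc n))"
    proof -
      have "real n + 1 > 0" by simp
      then show ?thesis by (simp add: power2_eq_square inverse_eq_divide)
    qed
    finally show "norm (eps g d l n * (real n + 1)) \<le> inverse (real (Suc n))"
      using eps_nn[of n] by simp
  qed
qed

definition ss :: "nat \<Rightarrow> real" where
  "ss k = (if k = 0 then 2 * eps g d l 1 - eps g d l 2 else eps g d l k)"

definition kbeta :: "nat \<Rightarrow> complex" where
  "kbeta k = (if k = 0 then 1 else of_real (4 * eps g d l k))"

lemma kbeta_summable: "summable (\<lambda>k. norm (kbeta k))"
proof (rule summable_comparison_test[OF _ summable_mult[OF summable_invsq, of 4]])
  show "\<exists>N. \<forall>n\<ge>N. norm (norm (kbeta n)) \<le> 4 * (1 / (real n + 1)^2)"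
  proof (intro exI[of _ 1] allI impI)
    fix n :: nat assume "1 \<le> n"
    then have "norm (norm (kbeta n)) = 4 * eps g d l n" using eps_nn[of n] by (simp add: kbeta_def)
    also have "\<dots> \<le> 4 * (1 / (real n + 1)^2)" by (intro mult_left_mono eps_le) auto
    finally show "norm (norm (kbeta n)) \<le> 4 * (1 / (real n + 1)^2)" .
  qed
qed

lemma kbeta_bound: "norm (kbeta k) \<le> 4"
proof -
  have "1 \<le> (real k + 1)^2" by (intro one_le_power) simp
  then have "1 / (real k + 1)^2 \<le> 1" by (simp add: divide_le_eq)
  then have "eps g d l k \<le> 1" using eps_le[of k] by linarith
  then show ?thesis using eps_nn[of k] by (simp add: kbeta_def)
qed

lemma kernel_pos:
  assumes w: "norm w = 1"
  shows "Re (\<Sum>k. kbeta k * w^k) \<ge> 1 - 4 * eps g d l 1 + 2 * eps g d l 2"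
proof -
  define c where "c k = (if k = 0 then 1/2 else Re (w^k))" for k
  have e21: "eps g d l 2 \<le> eps g d l 1" using eps_dec[of 1] by (simp add: numeral_2_eq_2)
  have F: "0 \<le> (\<Sum>k. ss k * c k)"
    unfolding c_def
  proof (rule fejer[OF w])
    show "ss k - 2 * ss (k+1) + ss (k+2) \<ge> 0" for k
      using eps_conv[of k] by (cases k) (auto simp: ss_def numeral_2_eq_2)
    show "ss (Suc k) \<le> ss k" for k
      using eps_dec[of k] e21 eps_nn[of 1] by (cases k) (auto simp: ss_def)
    show "ss k \<ge> 0" for k using eps_nn[of k] e21 eps_nn[of 1] by (auto simp: ss_def)
    have "(\<lambda>n. ss (Suc n)) = (\<lambda>n. eps g d l (Suc n))" by (simp add: ss_def)
    then have "summable (\<lambda>n. ss (Suc n))" using eps_summable summable_Suc_iff[of "eps g d l"] by simp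
    then show "summable ss" using summable_Suc_iff[of ss] by simp
    have "(\<lambda>n. ss (Suc n) * (real (Suc n) + 1)) \<longlonglongrightarrow> 0"
      using filterlim_compose[OF eps_lim filterlim_Suc] by (simp add: ss_def o_def)
    then show "(\<lambda>n. ss n * (real n + 1)) \<longlonglongrightarrow> 0"
      using filterlim_sequentially_Suc[of "\<lambda>n. ss n * (real n + 1)"] by simp
  qed
  have sc: "summable (\<lambda>k. ss k * c k)"
  proof (rule summable_norm_cancel, rule summable_comparison_test[OF _ summable_mult[OF summable_invsq, of 4]])
    have cb: "\<bar>c k\<bar> \<le> 1" for k
      using abs_Re_le_cmod[of "w^k"] w by (simp add: c_def norm_power)
    have "\<bar>ss k\<bar> \<le> 4 * (1 / (real k + 1)^2)" for k
      using eps_le[of k] eps_nn[of k] eps_le[of 1] eps_nn[of 2] e21 eps_nn[of 1] by (auto simp: ss_def)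
    then show "\<exists>N. \<forall>n\<ge>N. norm (norm (ss n * c n)) \<le> 4 * (1 / (real n + 1)^2)"
      using cb by (intro exI[of _ 0]) (auto simp: abs_mult intro: mult_le_one order.trans[OF mult_right_le_one_le])
  qed
  have sb: "summable (\<lambda>k. kbeta k * w^k)"
    by (rule summable_norm_cancel) (simp add: norm_mult norm_power w kbeta_summable)
  have "Re (\<Sum>k. kbeta k * w^k) = (\<Sum>k. Re (kbeta k * w^k))"
    using sums_Re[OF summable_sums[OF sb]] by (simp add: sums_iff)
  also have "(\<lambda>k. Re (kbeta k * w^k)) = (\<lambda>k. 4 * (ss k * c k) + (if k = 0 then 1 - 2 * ss 0 else 0))"
    by (rule ext) (auto simp: kbeta_def c_def ss_def field_simps)
  also have "(\<Sum>k. 4 * (ss k * c k) + (if k = 0 then 1 - 2 * ss 0 else 0)) = 4 * (\<Sum>k. ss k * c k) + (1 - 2 * ss 0)"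
  proof -
    have "(\<lambda>k. 4 * (ss k * c k) + (if k = 0 then 1 - 2 * ss 0 else 0)) sums (4 * (\<Sum>k. ss k * c k) + (1 - 2 * ss 0))"
      by (intro sums_add sums_mult summable_sums sc) (rule sums_single[of 0 "\<lambda>_. 1 - 2 * ss 0", simplified])
    then show ?thesis by (simp add: sums_iff)
  qed
  finally show ?thesis using F by (simp add: ss_def)
qed

lemma kernel_const_pos: "1 - 4 * eps g d l 1 + 2 * eps g d l 2 > 0"
proof -
  have "eps g d l 1 \<le> 1/4" using eps_le[of 1] by simp
  moreover have "eps g d l 2 > 0" using A CC_pos[of 2] by (simp add: eps_def)
  ultimately show ?thesis by linarith
qed

end



lemma D_series:
  assumes hol: "F holomorphic_on unit_disc" and z: "z \<in> unit_disc"
  shows "(\<lambda>n. taylor_coeff F (n+j) * (fact (n+j) / fact n) * z^n) sums ((deriv ^^ j) F z)"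
proof -
  have h: "(deriv ^^ j) F holomorphic_on unit_disc"
    by (rule holomorphic_higher_deriv[OF hol]) simp
  have "(\<lambda>n. (deriv ^^ n) ((deriv ^^ j) F) 0 / fact n * (z - 0)^n) sums ((deriv ^^ j) F z)"
    by (rule holomorphic_power_series[OF h z])
  moreover have "(deriv ^^ n) ((deriv ^^ j) F) = (deriv ^^ (n+j)) F" for n
    by (simp add: funpow_add)
  ultimately show ?thesis
    by (simp add: taylor_coeff_def)
qed

lemma G_series:
  assumes hol: "F holomorphic_on unit_disc" and z: "z \<in> unit_disc"
  shows "(\<lambda>m. of_real (CC g d m) * taylor_coeff F (Suc m) * z^m) sums
    (of_real g * deriv F z + of_real d * z * (deriv ^^ 2) F z + of_real ((d - g)/2) * z^2 * (deriv ^^ 3) F z)"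
proof -
  define a where "a = taylor_coeff F"
  have S1: "(\<lambda>n. a (Suc n) * (1 + of_nat n) * z^n) sums (deriv F z)"
    using D_series[OF hol z, of 1] by (simp add: a_def)
  have f2: "(fact (n+2) / fact n :: complex) = (of_nat n + 2) * (of_nat n + 1)" for n
  proof -
    have "(fact (n+2) :: complex) = (of_nat n + 2) * (of_nat n + 1) * fact n"
      by (simp add: numeral_2_eq_2 algebra_simps)
    then show ?thesis by simp
  qed
  have f3: "(fact (n+3) / fact n :: complex) = (of_nat n + 3) * (of_nat n + 2) * (of_nat n + 1)" for n
  proof -
    have "(fact (n+3) :: complex) = (of_nat n + 3) * (of_nat n + 2) * (of_nat n + 1) * fact n"
      by (simp add: numeral_3_eq_3 numeral_2_eq_2 algebra_simps)
    then show ?thesis by simp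
  qed
  have S2: "(\<lambda>n. a (n+2) * ((of_nat n + 2) * (of_nat n + 1)) * z^n) sums ((deriv ^^ 2) F z)"
    using D_series[OF hol z, of 2] unfolding f2 by (simp add: a_def)
  have S3: "(\<lambda>n. a (n+3) * ((of_nat n + 3) * (of_nat n + 2) * (of_nat n + 1)) * z^n) sums ((deriv ^^ 3) F z)"
    using D_series[OF hol z, of 3] unfolding f3 by (simp add: a_def)
  define h2 where "h2 m = a (Suc m) * ((of_nat m + 1) * of_nat m) * z^m" for m
  define h3 where "h3 m = a (Suc m) * ((of_nat m + 1) * of_nat m * (of_nat m - 1)) * z^m" for m
  have H2: "h2 sums (z * (deriv ^^ 2) F z)"
  proof -
    have "(\<lambda>n. h2 (Suc n)) = (\<lambda>n. z * (a (n+2) * ((of_nat n + 2) * (of_nat n + 1)) * z^n))"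
      by (rule ext) (simp add: h2_def algebra_simps numeral_2_eq_2)
    then have "(\<lambda>n. h2 (Suc n)) sums (z * (deriv ^^ 2) F z)" using sums_mult[OF S2, of z] by simp
    then show ?thesis using sums_Suc_iff[of h2] by (simp add: h2_def)
  qed
  have H3: "h3 sums (z^2 * (deriv ^^ 3) F z)"
  proof -
    have "(\<lambda>n. h3 (Suc (Suc n))) = (\<lambda>n. z^2 * (a (n+3) * ((of_nat n + 3) * (of_nat n + 2) * (of_nat n + 1)) * z^n))"
      by (rule ext) (simp add: h3_def algebra_simps numeral_3_eq_3 numeral_2_eq_2)
    then have "(\<lambda>n. h3 (Suc (Suc n))) sums (z^2 * (deriv ^^ 3) F z)" using sums_mult[OF S3, of "z^2"] by simp
    then have "(\<lambda>n. h3 (Suc n)) sums (z^2 * (deriv ^^ 3) F z)"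
      using sums_Suc_iff[of "\<lambda>n. h3 (Suc n)"] by (simp add: h3_def)
    then show ?thesis using sums_Suc_iff[of h3] by (simp add: h3_def)
  qed
  have "(\<lambda>m. of_real g * (a (Suc m) * (1 + of_nat m) * z^m) + of_real d * h2 m + of_real ((d - g)/2) * h3 m) sums
    (of_real g * deriv F z + of_real d * (z * (deriv ^^ 2) F z) + of_real ((d - g)/2) * (z^2 * (deriv ^^ 3) F z))"
    by (intro sums_add sums_mult S1 H2 H3)
  moreover have "(\<lambda>m. of_real g * (a (Suc m) * (1 + of_nat m) * z^m) + of_real d * h2 m + of_real ((d - g)/2) * h3 m)
     = (\<lambda>m. of_real (CC g d m) * taylor_coeff F (Suc m) * z^m)"
  proof (rule ext)
    fix m
    have "CC g d m = g*(1 + real m) + d*((real m+1)*real m) + (d-g)/2*((real m+1)*real m*(real m - 1))"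
      unfolding CC_def by (simp add: power2_eq_square field_simps)
    then have cc: "of_real (CC g d m) = (of_real g * (1 + of_nat m) + of_real d * ((of_nat m + 1) * of_nat m)
       + of_real ((d - g)/2) * ((of_nat m + 1) * of_nat m * (of_nat m - 1)) :: complex)"
      by simp
    have "of_real g * (a (Suc m) * (1 + of_nat m) * z^m) + of_real d * h2 m + of_real ((d - g)/2) * h3 m
      = (of_real g * (1 + of_nat m) + of_real d * ((of_nat m + 1) * of_nat m)
       + of_real ((d - g)/2) * ((of_nat m + 1) * of_nat m * (of_nat m - 1))) * a (Suc m) * z^m"
      unfolding h2_def h3_def by algebra
    then show "of_real g * (a (Suc m) * (1 + of_nat m) * z^m) + of_real d * h2 m + of_real ((d - g)/2) * h3 m
      = of_real (CC g d m) * taylor_coeff F (Suc m) * z^m"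
      unfolding cc by (simp add: a_def)
  qed
  ultimately show ?thesis by (simp add: mult.assoc)
qed

lemma tc_bounded:
  assumes hol: "F holomorphic_on unit_disc" and r: "0 \<le> r" "r < 1"
  obtains K where "K > 0" "\<And>n. norm (taylor_coeff F n * of_real r ^ n) \<le> K"
proof -
  have "(\<lambda>n. taylor_coeff F n * of_real r ^ n) sums F (of_real r)"
    using holomorphic_power_series[OF hol, of "of_real r"] r by (simp add: taylor_coeff_def)
  then have "(\<lambda>n. taylor_coeff F n * of_real r ^ n) \<longlonglongrightarrow> 0"
    by (intro summable_LIMSEQ_zero) (auto simp: sums_iff)
  then have "Bseq (\<lambda>n. taylor_coeff F n * of_real r ^ n)" by (intro convergent_imp_Bseq convergentI)
  then show ?thesis using that by (auto simp: Bseq_def)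
qed

lemma tc_abs_summable:
  assumes hol: "F holomorphic_on unit_disc" and r: "0 \<le> r" "r < 1"
  shows "summable (\<lambda>n. norm (taylor_coeff F n * of_real r ^ n))"
proof -
  define x where "x = (1 + r) / 2"
  have x: "0 \<le> x" "x < 1" "r < x" using r by (auto simp: x_def)
  have "(\<lambda>n. taylor_coeff F n * of_real x ^ n) sums F (of_real x)"
    using holomorphic_power_series[OF hol, of "of_real x"] x by (simp add: taylor_coeff_def)
  then have "summable (\<lambda>n. taylor_coeff F n * of_real x ^ n)" by (simp add: sums_iff)
  then show ?thesis by (rule powser_insidea) (use x r in simp)
qed

lemma hadamard_props:
  assumes h1: "F1 holomorphic_on unit_disc" and h2: "F2 holomorphic_on unit_disc"
  shows "hadamard F1 F2 holomorphic_on unit_disc"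
    and "\<And>n. taylor_coeff (hadamard F1 F2) n = taylor_coeff F1 n * taylor_coeff F2 n"
proof -
  define c where "c n = taylor_coeff F1 n * taylor_coeff F2 n" for n
  have heq: "hadamard F1 F2 = eval_fps (Abs_fps c)"
    by (rule ext) (simp add: hadamard_def eval_fps_def c_def)
  have rad: "fps_conv_radius (Abs_fps c) \<ge> 1"
    unfolding fps_conv_radius_def fps_nth_Abs_fps
  proof (rule conv_radius_geI_ex')
    fix r :: real assume r: "0 < r" "ereal r < 1"
    define \<rho> where "\<rho> = sqrt r"
    have \<rho>: "0 \<le> \<rho>" "\<rho> < 1" "\<rho> * \<rho> = r" using r by (auto simp: \<rho>_def real_sqrt_lt_1_iff)
    obtain K where K: "K > 0" "\<And>n. norm (taylor_coeff F1 n * of_real \<rho> ^ n) \<le> K"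
      using tc_bounded[OF h1 \<rho>(1,2)] by blast
    have sb: "summable (\<lambda>n. norm (taylor_coeff F2 n * of_real \<rho> ^ n))"
      by (rule tc_abs_summable[OF h2 \<rho>(1,2)])
    show "summable (\<lambda>n. c n * of_real r ^ n)"
    proof (rule summable_norm_cancel, rule summable_comparison_test[OF _ summable_mult[OF sb, of K]])
      show "\<exists>N. \<forall>n\<ge>N. norm (norm (c n * of_real r ^ n)) \<le> K * norm (taylor_coeff F2 n * of_real \<rho> ^ n)"
      proof (intro exI[of _ 0] allI impI)
        fix n :: nat
        have "c n * of_real r ^ n = (taylor_coeff F1 n * of_real \<rho> ^ n) * (taylor_coeff F2 n * of_real \<rho> ^ n)"
          by (simp add: c_def \<rho>(3)[symmetric] power_mult_distrib algebra_simps)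
        then have "norm (c n * of_real r ^ n) = norm (taylor_coeff F1 n * of_real \<rho> ^ n) * norm (taylor_coeff F2 n * of_real \<rho> ^ n)"
          by (simp add: norm_mult)
        also have "\<dots> \<le> K * norm (taylor_coeff F2 n * of_real \<rho> ^ n)"
          by (intro mult_right_mono K(2)) simp
        finally show "norm (norm (c n * of_real r ^ n)) \<le> K * norm (taylor_coeff F2 n * of_real \<rho> ^ n)" by simp
      qed
    qed
  qed
  have sub: "unit_disc \<subseteq> eball 0 (fps_conv_radius (Abs_fps c))"
    using rad by (intro ball_eball_mono) (metis one_ereal_def)
  show "hadamard F1 F2 holomorphic_on unit_disc"
    unfolding heq by (rule holomorphic_on_eval_fps[OF sub])
  have "fps_conv_radius (Abs_fps c) > 0" by (rule order.strict_trans2[OF _ rad]) simp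
  then have "eval_fps (Abs_fps c) has_fps_expansion Abs_fps c" by (rule eval_fps_has_fps_expansion)
  from fps_nth_fps_expansion[OF this] show "taylor_coeff (hadamard F1 F2) n = taylor_coeff F1 n * taylor_coeff F2 n" for n
    by (simp add: heq taylor_coeff_def c_def)
qed



lemma sums_single0: "(\<lambda>n. if n = 0 then c else 0) sums (c::'a::{t2_space,comm_monoid_add})"
  using sums_single[of 0 "\<lambda>_. c"] by simp

lemma core:
  fixes g d l :: real and g1 g2 :: "nat \<Rightarrow> complex" and z :: complex
  assumes A: "0 \<le> l" "l < g" "g \<le> d"
    and g10: "g1 0 = of_real g" and g20: "g2 0 = of_real g"
    and s1: "\<And>w. w \<in> unit_disc \<Longrightarrow> summable (\<lambda>m. g1 m * w^m)"
    and s2: "\<And>w. w \<in> unit_disc \<Longrightarrow> summable (\<lambda>m. g2 m * w^m)"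
    and r1: "\<And>w. w \<in> unit_disc \<Longrightarrow> Re (\<Sum>m. g1 m * w^m) > l"
    and r2: "\<And>w. w \<in> unit_disc \<Longrightarrow> Re (\<Sum>m. g2 m * w^m) > l"
    and z: "z \<in> unit_disc"
  shows "Re (\<Sum>m. g1 m * g2 m / of_real (CC g d m) * z^m) > l"
proof (cases "z = 0")
  case True
  have "CC g d 0 = g" by (simp add: CC_def)
  moreover have "(\<Sum>m. g1 m * g2 m / of_real (CC g d m) * 0^m) = g1 0 * g2 0 / of_real (CC g d 0)"
    by (rule powser_zero)
  ultimately have "(\<Sum>m. g1 m * g2 m / of_real (CC g d m) * z^m) = of_real g"
    using True g10 g20 A by (simp add: power2_eq_square)
  then show ?thesis using A by simp
next
  case False
  define r where "r = sqrt (norm z)"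
  have r: "0 < r" "r < 1" "r^2 = norm z" using False z by (auto simp: r_def real_sqrt_lt_1_iff)
  define \<zeta> where "\<zeta> = z / of_real (norm z)"
  have \<zeta>: "norm \<zeta> = 1" using False by (simp add: \<zeta>_def norm_divide)
  have zeq: "z = (of_real r)^2 * \<zeta>" using False r by (simp add: \<zeta>_def of_real_power[symmetric])
  define a' where "a' m = g1 m * of_real r ^ m" for m
  define b' where "b' m = g2 m * of_real r ^ m" for m
  define x where "x = (1 + r) / 2"
  have x: "of_real x \<in> unit_disc" "norm (of_real r :: complex) < norm (of_real x :: complex)"
  proof -
    have "norm (complex_of_real x) = x" by (simp only: norm_of_real) (use r in \<open>simp add: x_def\<close>)
    moreover have "x < 1" "r < x" using r by (auto simp: x_def)
    ultimately show "of_real x \<in> unit_disc" "norm (of_real r :: complex) < norm (of_real x :: complex)"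
      using r by auto
  qed
  have sa: "summable (\<lambda>n. norm (a' n))"
    unfolding a'_def by (rule powser_insidea[OF s1[OF x(1)] x(2)])
  have sb: "summable (\<lambda>n. norm (b' n))"
    unfolding b'_def by (rule powser_insidea[OF s2[OF x(1)] x(2)])
  have inD: "of_real r * w \<in> unit_disc" if "norm w = 1" for w
    using that r by (simp add: norm_mult)
  have ha: "Re (\<Sum>n. a' n * w^n) \<ge> l" if "norm w = 1" for w
  proof -
    have "(\<Sum>n. a' n * w^n) = (\<Sum>n. g1 n * (of_real r * w)^n)"
      by (simp add: a'_def power_mult_distrib mult.assoc)
    then show ?thesis using r1[OF inD[OF that]] by simp
  qed
  have hb: "Re (\<Sum>n. b' n * w^n) \<ge> l" if "norm w = 1" for w
  proof -
    have "(\<Sum>n. b' n * w^n) = (\<Sum>n. g2 n * (of_real r * w)^n)"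
      by (simp add: b'_def power_mult_distrib mult.assoc)
    then show ?thesis using r2[OF inD[OF that]] by simp
  qed
  define c0 where "c0 = 1 - 4 * eps g d l 1 + 2 * eps g d l 2"
  have c0: "c0 > 0" using kernel_const_pos[OF A] by (simp add: c0_def)
  have kern: "Re (\<Sum>k. kbeta g d l k * w^k) \<ge> c0" if "norm w = 1" for w
    using kernel_pos[OF A that] by (simp add: c0_def)
  have beta0: "kbeta g d l 0 = 1" by (simp add: kbeta_def[OF A])
  have a'0: "a' 0 = of_real g" "b' 0 = of_real g" by (simp_all add: a'_def b'_def g10 g20)
  define \<beta>1 where "\<beta>1 k = kbeta g d l k * b' k + (if k = 0 then of_real (g - 2*l) else 0)" for k
  have sbb: "summable (\<lambda>k. norm (kbeta g d l k * b' k))"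
  proof (rule summable_comparison_test[OF _ summable_mult[OF sb, of 4]])
    show "\<exists>N. \<forall>n\<ge>N. norm (norm (kbeta g d l n * b' n)) \<le> 4 * norm (b' n)"
      using kbeta_bound[OF A] by (auto simp: norm_mult intro!: mult_right_mono)
  qed
  have ssingle: "summable (\<lambda>k. norm (if k = 0 then (y::complex) else 0))" for y
    using summable_single[of 0 "\<lambda>_. norm y"] by (simp add: if_distrib cong: if_cong)
  have sb1: "summable (\<lambda>k. norm (\<beta>1 k))"
  proof (rule summable_comparison_test[OF _ summable_add[OF sbb ssingle[of "of_real (g - 2*l)"]]])
    show "\<exists>N. \<forall>n\<ge>N. norm (norm (\<beta>1 n)) \<le> norm (kbeta g d l n * b' n) + norm (if n = 0 then complex_of_real (g - 2 * l) else 0)"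
      by (auto simp: \<beta>1_def intro: norm_triangle_ineq)
  qed
  have hb1: "Re (\<Sum>k. \<beta>1 k * w^k) \<ge> 2 * c0 * (g - l)" if w: "norm w = 1" for w
  proof -
    have L: "Re (\<Sum>k. kbeta g d l k * b' k * w^k) + Re (kbeta g d l 0) * (g - 2*l) \<ge> 2*c0*(g - l)"
      by (rule lemmaA[OF sb kbeta_summable[OF A] a'0(2) hb kern w])
    have sm: "summable (\<lambda>k. kbeta g d l k * b' k * w^k)"
      by (rule summable_norm_cancel) (use sbb in \<open>simp add: norm_mult norm_power w\<close>)
    have "(\<lambda>k. \<beta>1 k * w^k) = (\<lambda>k. kbeta g d l k * b' k * w^k + (if k = 0 then of_real (g - 2*l) else 0))"
      by (rule ext) (simp add: \<beta>1_def algebra_simps)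
    moreover have "(\<lambda>k. kbeta g d l k * b' k * w^k + (if k = 0 then of_real (g - 2*l) else 0)) sums
        ((\<Sum>k. kbeta g d l k * b' k * w^k) + of_real (g - 2*l))"
      by (intro sums_add summable_sums sm) (rule sums_single0)
    ultimately have "(\<Sum>k. \<beta>1 k * w^k) = (\<Sum>k. kbeta g d l k * b' k * w^k) + of_real (g - 2*l)"
      by (simp add: sums_iff)
    then show ?thesis using L beta0 by simp
  qed
  have L2: "Re (\<Sum>k. \<beta>1 k * a' k * \<zeta>^k) + Re (\<beta>1 0) * (g - 2*l) \<ge> 2*(2 * c0 * (g - l))*(g - l)"
    by (rule lemmaA[OF sa sb1 a'0(1) ha hb1 \<zeta>])
  have b10: "\<beta>1 0 = of_real (2*g - 2*l)" by (simp add: \<beta>1_def beta0 a'0)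
  define P where "P k = kbeta g d l k * b' k * a' k * \<zeta>^k" for k
  define T where "T k = g1 k * g2 k / of_real (CC g d k) * z^k" for k
  have sP: "summable P"
  proof (rule summable_norm_cancel, rule summable_comparison_test[OF _ summable_mult[OF sa, of "4 * (\<Sum>n. norm (b' n))"]])
    have bb: "norm (b' n) \<le> (\<Sum>n. norm (b' n))" for n
      using sum_le_suminf[OF sb, of "{n}"] by simp
    show "\<exists>N. \<forall>n\<ge>N. norm (norm (P n)) \<le> 4 * (\<Sum>n. norm (b' n)) * norm (a' n)"
    proof (intro exI[of _ 0] allI impI)
      fix n :: nat
      have "norm (P n) = norm (kbeta g d l n) * norm (b' n) * norm (a' n)"
        using \<zeta> by (simp add: P_def norm_mult norm_power)
      also have "\<dots> \<le> 4 * (\<Sum>n. norm (b' n)) * norm (a' n)"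
        by (intro mult_right_mono mult_mono kbeta_bound[OF A] bb) auto
      finally show "norm (norm (P n)) \<le> 4 * (\<Sum>n. norm (b' n)) * norm (a' n)" by simp
    qed
  qed
  have CCpos: "CC g d k > 0" for k using CC_pos[OF A] .
  have Pk: "P k = of_real (4 * (g - l)) * T k + (if k = 0 then of_real (g^2 - 4 * (g - l) * g) else 0)" for k
  proof -
    have zk: "of_real r ^ k * of_real r ^ k * \<zeta>^k = z^k"
      by (simp add: zeq power_mult_distrib power2_eq_square power_mult[symmetric] mult_ac)
    have P': "P k = kbeta g d l k * g1 k * g2 k * z^k"
      unfolding P_def a'_def b'_def zk[symmetric] by (simp add: mult_ac)
    show ?thesis
    proof (cases "k = 0")
      case True
      have "CC g d 0 = g" by (simp add: CC_def)
      then show ?thesis unfolding P' using True A by (simp add: T_def beta0 g10 g20 power2_eq_square field_simps)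
    next
      case False
      have "kbeta g d l k = of_real (4 * (g - l) / CC g d k)"
        using False by (simp add: kbeta_def[OF A] eps_def)
      then show ?thesis unfolding P' using False CCpos[of k] by (simp add: T_def)
    qed
  qed
  define K where "K = (of_real (g^2 - 4 * (g - l) * g) :: complex)"
  have sT: "T sums (((\<Sum>k. P k) - K) / of_real (4 * (g - l)))"
  proof -
    have "(\<lambda>k. P k - (if k = 0 then K else 0)) sums ((\<Sum>k. P k) - K)"
      by (intro sums_diff summable_sums sP) (rule sums_single0)
    then have "(\<lambda>k. (P k - (if k = 0 then K else 0)) / of_real (4 * (g - l))) sums (((\<Sum>k. P k) - K) / of_real (4 * (g - l)))"
      by (rule sums_divide)
    moreover have "(\<lambda>k. (P k - (if k = 0 then K else 0)) / of_real (4 * (g - l))) = T"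
      using A by (intro ext) (simp add: Pk K_def)
    ultimately show ?thesis by simp
  qed
  define S where "S = (\<Sum>k. T k)"
  have PS: "(\<Sum>k. P k) = of_real (4 * (g - l)) * S + K"
    using sT A by (simp add: S_def sums_iff field_simps)
  have B1: "(\<Sum>k. \<beta>1 k * a' k * \<zeta>^k) = (\<Sum>k. P k) + of_real ((g - 2*l) * g)"
  proof -
    have "(\<lambda>k. \<beta>1 k * a' k * \<zeta>^k) = (\<lambda>k. P k + (if k = 0 then of_real ((g - 2*l) * g) else 0))"
      by (rule ext) (simp add: \<beta>1_def P_def a'0 algebra_simps)
    moreover have "(\<lambda>k. P k + (if k = 0 then of_real ((g - 2*l) * g) else 0)) sums ((\<Sum>k. P k) + of_real ((g - 2*l) * g))"
      by (intro sums_add summable_sums sP) (rule sums_single0)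
    ultimately show ?thesis by (simp add: sums_iff)
  qed
  have "Re (\<Sum>k. \<beta>1 k * a' k * \<zeta>^k) = 4 * (g - l) * Re S + (g^2 - 4 * (g - l) * g) + (g - 2*l) * g"
    unfolding B1 PS K_def by simp
  with L2 b10 have ineq: "4 * (g - l) * Re S + (g^2 - 4 * (g - l) * g) + (g - 2*l) * g + (2*g - 2*l) * (g - 2*l)
      \<ge> 2*(2 * c0 * (g - l))*(g - l)" by simp
  have "2*(2 * c0 * (g - l))*(g - l) > 0" using c0 A by simp
  with ineq have "4 * (g - l) * (Re S - l) > 0" by (simp add: algebra_simps power2_eq_square)
  then have "Re S > l" using A by (simp add: zero_less_mult_iff)
  then show ?thesis by (simp add: S_def T_def)
qed



theorem lemma15:
  fixes gam del lam :: real and F1 F2 :: "complex \<Rightarrow> complex"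
  assumes "0 \<le> lam" "lam < gam" "gam \<le> del"
    and "F1 \<in> class_R gam del lam" "F2 \<in> class_R gam del lam"
  shows "hadamard F1 F2 \<in> class_R gam del lam"
proof -
  note A = assms(1-3)
  define GF where "GF F z = of_real gam * deriv F z + of_real del * z * (deriv ^^ 2) F z
          + of_real ((del - gam) / 2) * z ^ 2 * (deriv ^^ 3) F z" for F :: "complex \<Rightarrow> complex" and z
  from assms(4) have h1: "F1 holomorphic_on unit_disc" "F1 0 = 0" "deriv F1 0 = 1"
    and R1: "\<And>z. z \<in> unit_disc \<Longrightarrow> Re (GF F1 z) > lam"
    by (auto simp: class_R_def class_A_def GF_def)
  from assms(5) have h2: "F2 holomorphic_on unit_disc" "F2 0 = 0" "deriv F2 0 = 1"
    and R2: "\<And>z. z \<in> unit_disc \<Longrightarrow> Re (GF F2 z) > lam"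
    by (auto simp: class_R_def class_A_def GF_def)
  define H where "H = hadamard F1 F2"
  have hH: "H holomorphic_on unit_disc" unfolding H_def by (rule hadamard_props(1)[OF h1(1) h2(1)])
  have tH: "taylor_coeff H n = taylor_coeff F1 n * taylor_coeff F2 n" for n
    unfolding H_def by (rule hadamard_props(2)[OF h1(1) h2(1)])
  have tc0: "taylor_coeff F 0 = F 0" for F by (simp add: taylor_coeff_def)
  have tc1: "taylor_coeff F (Suc 0) = deriv F 0" for F by (simp add: taylor_coeff_def)
  have H0: "H 0 = 0" using tH[of 0] h1 h2 by (simp add: tc0)
  have H1: "deriv H 0 = 1" using tH[of 1] h1 h2 by (simp add: tc1)
  define g1 where "g1 m = of_real (CC gam del m) * taylor_coeff F1 (Suc m)" for m
  define g2 where "g2 m = of_real (CC gam del m) * taylor_coeff F2 (Suc m)" for m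
  have CC0: "CC gam del 0 = gam" by (simp add: CC_def)
  have g10: "g1 0 = of_real gam" using h1 by (simp add: g1_def CC0 tc1)
  have g20: "g2 0 = of_real gam" using h2 by (simp add: g2_def CC0 tc1)
  have ser1: "(\<lambda>m. g1 m * w^m) sums GF F1 w" if "w \<in> unit_disc" for w
    using G_series[OF h1(1) that, of gam del] by (simp add: g1_def GF_def)
  have ser2: "(\<lambda>m. g2 m * w^m) sums GF F2 w" if "w \<in> unit_disc" for w
    using G_series[OF h2(1) that, of gam del] by (simp add: g2_def GF_def)
  have main: "Re (GF H z) > lam" if z: "z \<in> unit_disc" for z
  proof -
    have "(\<lambda>m. of_real (CC gam del m) * taylor_coeff H (Suc m) * z^m) sums GF H z"
      using G_series[OF hH z, of gam del] by (simp add: GF_def)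
    moreover have "(\<lambda>m. of_real (CC gam del m) * taylor_coeff H (Suc m) * z^m) =
        (\<lambda>m. g1 m * g2 m / of_real (CC gam del m) * z^m)"
    proof (rule ext)
      fix m
      have "CC gam del m > 0" using CC_pos[OF A] .
      then show "of_real (CC gam del m) * taylor_coeff H (Suc m) * z^m = g1 m * g2 m / of_real (CC gam del m) * z^m"
        by (simp add: tH g1_def g2_def)
    qed
    ultimately have "GF H z = (\<Sum>m. g1 m * g2 m / of_real (CC gam del m) * z^m)"
      by (simp add: sums_iff)
    moreover have "Re (\<Sum>m. g1 m * g2 m / of_real (CC gam del m) * z^m) > lam"
    proof (rule core[where ?g1.0=g1 and ?g2.0=g2, OF A g10 g20])
      show "z \<in> unit_disc" by (rule z)
      show "summable (\<lambda>m. g1 m * w^m)" if "w \<in> unit_disc" for w using ser1[OF that] by (simp add: sums_iff)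
      show "summable (\<lambda>m. g2 m * w^m)" if "w \<in> unit_disc" for w using ser2[OF that] by (simp add: sums_iff)
      show "Re (\<Sum>m. g1 m * w^m) > lam" if "w \<in> unit_disc" for w using ser1[OF that] R1[OF that] by (simp add: sums_iff)
      show "Re (\<Sum>m. g2 m * w^m) > lam" if "w \<in> unit_disc" for w using ser2[OF that] R2[OF that] by (simp add: sums_iff)
    qed
    ultimately show ?thesis by simp
  qed
  show ?thesis
    using hH H0 H1 main unfolding H_def class_R_def class_A_def GF_def by auto
qed


end
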